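(* Let $V=\{1,\dots,n\}$ and let $x=(x_v)_{v\in V}$ be binary variables (all $x_v\in\{0,1\}$, or all $x_v\in\{-1,+1\}$), with configuration space $\mathbb{X}$. Let $\mathcal{G}\subset 2^V$ be a hypergraph whose hyperedges include the singletons $\{v\}$, $v\in V$, and let $$f(x)=\sum_{E\in\mathcal{G}}\theta_E\,\phi_E(x_E),\qquad \phi_E(x_E)=\prod_{v\in E}x_v,$$ with $f^*=\max_{x\in\mathbb{X}}f(x)$. Let an augmented model be given as follows: a finite vertex set $V'$, a hypergraph $\mathcal{G}'\subset 2^{V'}$ (containing the singletons of $V'$), and a surjective map $\Gamma:\mathcal{G}'\to\mathcal{G}$ such that each $E'\in\mathcal{G}'$ is a replica of $E=\Gamma(E')$, i.e. $\Gamma$ restricted to vertices maps $V'$ onto $V$, maps $E'$ bijectively onto $\Gamma(E')$, and maps singletons to singletons. Write $\mathcal{R}(E)=\Gamma^{-1}(E)$, and $A\equiv B$ for $A,B\in\mathcal{G}'$ with $A\neq B$ and $\Gamma(A)=\Gamma(B)$. Let parameters $\theta'_{E'}$, $E'\in\mathcal{G}'$, satisfy $\theta_E=\sum_{E'\in\mathcal{R}(E)}\theta'_{E'}$ for all $E\in\mathcal{G}$, and set $f'(x')=\sum_{E'\in\mathcal{G}'}\theta'_{E'}\phi_{E'}(x'_{E'})$ for $x'\in\mathbb{X}'$ (binary configurations on $V'$). Let $\zeta:\mathbb{X}\to\mathbb{X}'$ be the replication map $\zeta(x)_{v'}=x_{\Gamma(v')}$, so $\zeta(\mathbb{X})$ is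 the set of consistent configurations. Define the Lagrangian $$L(x',\lambda)=f'(x')+\sum_{A\equiv B}\lambda_{A,B}\big(\phi_A(x'_A)-\phi_B(x'_B)\big),$$ the dual function $g(\lambda)=\max_{x'\in\mathbb{X}'}L(x',\lambda)$, and $g^*=\min_\lambda g(\lambda)$. Then $g(\lambda)\ge f^*$ for all $\lambda$, hence $g^*\ge f^*$. If $g(\lambda^* )=g^*$, then exactly one of the following holds: (i) $\arg\max_{x'\in\mathbb{X}'}L(x',\lambda^* )\cap\zeta(\mathbb{X})\neq\emptyset$; then $g^*=f^*$ (strong duality) and the set of all MAP estimates is obtained as $\arg\max_{x'\in\zeta(\mathbb{X})}f'(x')=\arg\max_{x'\in\mathbb{X}'}L(x',\lambda^* )\cap\zeta(\mathbb{X})$; (ii) $\arg\max_{x'\in\mathbb{X}'}L(x',\lambda^* )\cap\zeta(\mathbb{X})=\emptyset$; then there is a duality gap $g^*>f^*$ and for no choice of $\lambda$ does $\arg\max_{x'}L(x',\lambda)$ contain a consistent configuration. Moreover, for any $\lambda^*$, the condition $\arg\max_{x'\in\mathbb{X}'}L(x',\lambda^* )\cap\zeta(\mathbb{X})\neq\emptyset$ holds only if $g(\lambda^* )=g^*$.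
   Context: MAP estimation in a binary graphical model $p(x)\propto\exp f(x)$ amounts to maximizing $f$. Note $f'(\zeta(x))=f(x)$ for all $x\in\mathbb{X}$, so $f^*=\max_{x'\in\zeta(\mathbb{X})}f'(x')$, and this equals maximizing $f'$ subject to $\phi_A(x'_A)=\phi_B(x'_B)$ for all $A\equiv B$; $L$ relaxes these constraints with multipliers $\lambda_{A,B}\in\mathbb{R}$. For consistent $x'\in\zeta(\mathbb{X})$, $\zeta^{-1}(x')$ is the corresponding configuration of $\mathbb{X}$. *)

theory Defs
  imports Complex_Main "HOL-Library.FuncSet"
begin

definition configs :: "'a set \<Rightarrow> real set \<Rightarrow> ('a \<Rightarrow> real) set" where
  "configs V D = (V \<rightarrow>\<^sub>E D)"

definition phi :: "'a set \<Rightarrow> ('a \<Rightarrow> real) \<Rightarrow> real" where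
  "phi E x = (\<Prod>v\<in>E. x v)"

definition pot :: "'a set set \<Rightarrow> ('a set \<Rightarrow> real) \<Rightarrow> ('a \<Rightarrow> real) \<Rightarrow> real" where
  "pot G \<theta> x = (\<Sum>E\<in>G. \<theta> E * phi E x)"

definition argmax_on :: "('c \<Rightarrow> real) \<Rightarrow> 'c set \<Rightarrow> 'c set" where
  "argmax_on h S = {x \<in> S. \<forall>y\<in>S. h y \<le> h x}"

definition replicas :: "'b set set \<Rightarrow> ('b set \<Rightarrow> 'a set) \<Rightarrow> 'a set \<Rightarrow> 'b set set" where
  "replicas G' \<Gamma> E = {E' \<in> G'. \<Gamma> E' = E}"

definition equiv_pairs :: "'b set set \<Rightarrow> ('b set \<Rightarrow> 'a set) \<Rightarrow> ('b set \<times> 'b set) set" where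
  "equiv_pairs G' \<Gamma> = {(A, B). A \<in> G' \<and> B \<in> G' \<and> A \<noteq> B \<and> \<Gamma> A = \<Gamma> B}"

text \<open>Replication map zeta(x)_{v'} = x_{Gamma(v')} (here gamma is the vertex part of Gamma).\<close>
definition replicate_cfg :: "'b set \<Rightarrow> ('b \<Rightarrow> 'a) \<Rightarrow> ('a \<Rightarrow> real) \<Rightarrow> ('b \<Rightarrow> real)" where
  "replicate_cfg V' \<gamma> x = (\<lambda>v'. if v' \<in> V' then x (\<gamma> v') else undefined)"

definition lagrangian ::
  "'b set set \<Rightarrow> ('b set \<Rightarrow> real) \<Rightarrow> ('b set \<Rightarrow> 'a set) \<Rightarrow> ('b \<Rightarrow> real)
    \<Rightarrow> ('b set \<times> 'b set \<Rightarrow> real) \<Rightarrow> real" where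
  "lagrangian G' \<theta>' \<Gamma> x' lam =
     pot G' \<theta>' x' + (\<Sum>(A, B)\<in>equiv_pairs G' \<Gamma>. lam (A, B) * (phi A x' - phi B x'))"

definition dual_fun ::
  "('b \<Rightarrow> real) set \<Rightarrow> 'b set set \<Rightarrow> ('b set \<Rightarrow> real) \<Rightarrow> ('b set \<Rightarrow> 'a set)
    \<Rightarrow> ('b set \<times> 'b set \<Rightarrow> real) \<Rightarrow> real" where
  "dual_fun X' G' \<theta>' \<Gamma> lam = Max ((\<lambda>x'. lagrangian G' \<theta>' \<Gamma> x' lam) ` X')"

end

theory Submission
  imports Defs
begin

theorem proposition1:
  fixes n :: nat
    and D :: "real set"
    and G :: "nat set set"
    and \<theta> :: "nat set \<Rightarrow> real"
    and V' :: "'b set"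
    and G' :: "'b set set"
    and \<theta>' :: "'b set \<Rightarrow> real"
    and \<Gamma> :: "'b set \<Rightarrow> nat set"
    and \<gamma> :: "'b \<Rightarrow> nat"
  defines "V \<equiv> {1..n}"
  assumes D: "D = {0, 1} \<or> D = {-1, 1}"
    and G_sub: "G \<subseteq> Pow V"
    and G_sing: "\<forall>v\<in>V. {v} \<in> G"
    and V'_fin: "finite V'"
    and G'_sub: "G' \<subseteq> Pow V'"
    and G'_sing: "\<forall>v'\<in>V'. {v'} \<in> G'"
    and \<Gamma>_surj: "\<Gamma> ` G' = G"
    and \<gamma>_onto: "\<gamma> ` V' = V"
    and \<Gamma>_sing: "\<forall>v'\<in>V'. \<Gamma> {v'} = {\<gamma> v'}"
    and \<Gamma>_replica: "\<forall>E'\<in>G'. bij_betw \<gamma> E' (\<Gamma> E')"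
    and \<theta>_split: "\<forall>E\<in>G. \<theta> E = (\<Sum>E'\<in>replicas G' \<Gamma> E. \<theta>' E')"
  shows
    "let X = configs V D; X' = configs V' D;
         f = pot G \<theta>; f' = pot G' \<theta>';
         fstar = Max (f ` X);
         \<zeta> = replicate_cfg V' \<gamma>;
         L = lagrangian G' \<theta>' \<Gamma>;
         g = dual_fun X' G' \<theta>' \<Gamma>;
         gstar = (INF lam. g lam);
         AL = (\<lambda>lam. argmax_on (\<lambda>x'. L x' lam) X')
     in (\<forall>lam. g lam \<ge> fstar) \<and> gstar \<ge> fstar \<and>
        (\<forall>lams. g lams = gstar \<longrightarrow>
           ((AL lams \<inter> \<zeta> ` X \<noteq> {} \<and> gstar = fstar \<and>
             \<zeta> ` argmax_on f X = argmax_on f' (\<zeta> ` X) \<and>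
             argmax_on f' (\<zeta> ` X) = AL lams \<inter> \<zeta> ` X)
           \<or>
            (AL lams \<inter> \<zeta> ` X = {} \<and> gstar > fstar \<and>
             (\<forall>lam. AL lam \<inter> \<zeta> ` X = {})))) \<and>
        (\<forall>lams. AL lams \<inter> \<zeta> ` X \<noteq> {} \<longrightarrow> g lams = gstar)"
  proof -
  have finV: "finite V" unfolding V_def by simp
  have finD: "finite D" "D \<noteq> {}" using D by auto
  define X where "X = configs V D"
  define X' where "X' = configs V' D"
  define f where "f = pot G \<theta>"
  define f' where "f' = pot G' \<theta>'"
  define fstar where "fstar = Max (f ` X)"
  define \<zeta> where "\<zeta> = replicate_cfg V' \<gamma>"
  define L where "L = lagrangian G' \<theta>' \<Gamma>"
  define g where "g = dual_fun X' G' \<theta>' \<Gamma>"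
  define gstar where "gstar = (INF lam. g lam)"
  define AL where "AL = (\<lambda>lam. argmax_on (\<lambda>x'. L x' lam) X')"
  have finX: "finite X" "X \<noteq> {}" unfolding X_def configs_def using finV finD
    by (auto simp: finite_PiE PiE_eq_empty_iff)
  have finX': "finite X'" "X' \<noteq> {}" unfolding X'_def configs_def using V'_fin finD
    by (auto simp: finite_PiE PiE_eq_empty_iff)
  have finG': "finite G'" using G'_sub V'_fin by (meson finite_Pow_iff finite_subset)
  have finG: "finite G" using finG' \<Gamma>_surj by blast
  have zX': "\<zeta> x \<in> X'" if "x \<in> X" for x
    using that \<gamma>_onto unfolding X_def X'_def configs_def \<zeta>_def replicate_cfg_def
    by (auto simp: PiE_iff extensional_def)
  have phiz: "phi A (\<zeta> x) = phi (\<Gamma> A) x" if "A \<in> G'" for A x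
  proof -
    have AV: "A \<subseteq> V'" using that G'_sub by auto
    have "phi A (\<zeta> x) = (\<Prod>v\<in>A. x (\<gamma> v))"
      unfolding phi_def \<zeta>_def replicate_cfg_def using AV by (intro prod.cong) auto
    also have "\<dots> = (\<Prod>u\<in>\<Gamma> A. x u)"
      using prod.reindex_bij_betw[OF \<Gamma>_replica[rule_format, OF that], of x] by simp
    finally show ?thesis unfolding phi_def .
  qed
  have fz: "f' (\<zeta> x) = f x" for x
  proof -
    have "f' (\<zeta> x) = (\<Sum>E'\<in>G'. \<theta>' E' * phi (\<Gamma> E') x)"
      unfolding f'_def pot_def by (intro sum.cong) (auto simp: phiz)
    also have "\<dots> = (\<Sum>E\<in>G. \<Sum>E'\<in>{E'\<in>G'. \<Gamma> E' = E}. \<theta>' E' * phi (\<Gamma> E') x)"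
      using sum.group[OF finG' finG, of \<Gamma> "\<lambda>E'. \<theta>' E' * phi (\<Gamma> E') x"] \<Gamma>_surj by simp
    also have "\<dots> = (\<Sum>E\<in>G. \<theta> E * phi E x)"
    proof (intro sum.cong refl)
      fix E assume "E \<in> G"
      have "(\<Sum>E'\<in>{E'\<in>G'. \<Gamma> E' = E}. \<theta>' E' * phi (\<Gamma> E') x)
          = (\<Sum>E'\<in>{E'\<in>G'. \<Gamma> E' = E}. \<theta>' E' * phi E x)" by (intro sum.cong) auto
      also have "\<dots> = \<theta> E * phi E x"
        using \<theta>_split \<open>E \<in> G\<close> by (simp add: sum_distrib_right replicas_def)
      finally show "(\<Sum>E'\<in>{E'\<in>G'. \<Gamma> E' = E}. \<theta>' E' * phi (\<Gamma> E') x) = \<theta> E * phi E x" .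
    qed
    finally show ?thesis unfolding f_def pot_def .
  qed
  have Lz: "L (\<zeta> x) lam = f x" for x lam
  proof -
    have "(\<Sum>(A, B)\<in>equiv_pairs G' \<Gamma>. lam (A, B) * (phi A (\<zeta> x) - phi B (\<zeta> x))) = 0"
      by (intro sum.neutral) (auto simp: equiv_pairs_def phiz)
    then show ?thesis unfolding L_def lagrangian_def using fz unfolding f'_def by simp
  qed
  have fle: "f x \<le> fstar" if "x \<in> X" for x unfolding fstar_def using finX that by simp
  obtain x0 where x0: "x0 \<in> X" "f x0 = fstar" unfolding fstar_def using finX
    by (metis (no_types, lifting) Max_in finite_imageI image_iff image_is_empty)
  have Lle: "L x' lam \<le> g lam" if "x' \<in> X'" for x' lam
    unfolding g_def dual_fun_def L_def using finX' that by simp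
  have ALg: "L x' lam = g lam" if "x' \<in> AL lam" for x' lam
  proof -
    obtain y where y: "y \<in> X'" "g lam = L y lam" unfolding g_def dual_fun_def L_def using finX'
      by (metis (no_types, lifting) Max_in finite_imageI image_iff image_is_empty)
    from that have "x' \<in> X'" "L y lam \<le> L x' lam" using y unfolding AL_def argmax_on_def by auto
    then show ?thesis using Lle y by (metis order_antisym)
  qed
  have gge: "fstar \<le> g lam" for lam using Lle[OF zX'[OF x0(1)]] Lz x0 by metis
  have bdd: "bdd_below (range g)" using gge by (metis bdd_belowI2)
  have gs_le: "gstar \<le> g lam" for lam unfolding gstar_def using bdd by (simp add: cINF_lower)
  have gs_ge: "fstar \<le> gstar" unfolding gstar_def using gge by (simp add: cINF_greatest)
  have key: "g lam = gstar \<and> gstar = fstar" if ne0: "AL lam \<inter> \<zeta> ` X \<noteq> {}" for lam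
  proof -
    obtain x where x: "x \<in> X" "\<zeta> x \<in> AL lam" using ne0 by blast
    have "g lam = f x" using ALg[OF x(2)] Lz by simp
    then show ?thesis using fle[OF x(1)] gs_le[of lam] gs_ge by linarith
  qed
  have inAL: "\<zeta> x \<in> AL lam \<longleftrightarrow> f x = g lam" if "x \<in> X" for x lam
  proof
    assume "\<zeta> x \<in> AL lam"
    then show "f x = g lam" using ALg[of "\<zeta> x" lam] Lz by simp
  next
    assume h: "f x = g lam"
    have "\<forall>y\<in>X'. L y lam \<le> L (\<zeta> x) lam" using Lle h Lz by simp
    then show "\<zeta> x \<in> AL lam" unfolding AL_def argmax_on_def using zX'[OF that] by blast
  qed
  have part1: "\<zeta> ` argmax_on f X = argmax_on f' (\<zeta> ` X)"
    unfolding argmax_on_def using fz by auto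
  have part2: "argmax_on f' (\<zeta> ` X) = AL lam \<inter> \<zeta> ` X" if "g lam = fstar" for lam
  proof -
    have "argmax_on f' (\<zeta> ` X) = \<zeta> ` {x\<in>X. f x = fstar}"
    proof (intro equalityI subsetI)
      fix y assume "y \<in> argmax_on f' (\<zeta> ` X)"
      then obtain x where x: "x \<in> X" "y = \<zeta> x" "\<forall>z\<in>\<zeta> ` X. f' z \<le> f' (\<zeta> x)"
        unfolding argmax_on_def by blast
      have "f x0 \<le> f x" using x(3) x0(1) fz by auto
      then have "f x = fstar" using fle[OF x(1)] x0(2) by linarith
      then show "y \<in> \<zeta> ` {x\<in>X. f x = fstar}" using x by blast
    next
      fix y assume "y \<in> \<zeta> ` {x\<in>X. f x = fstar}"
      then obtain x where x: "x \<in> X" "y = \<zeta> x" "f x = fstar" by blast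
      have "\<forall>z\<in>\<zeta> ` X. f' z \<le> f' y" using x fz fle by auto
      then show "y \<in> argmax_on f' (\<zeta> ` X)" unfolding argmax_on_def using x by blast
    qed
    also have "\<dots> = AL lam \<inter> \<zeta> ` X" using inAL that by auto
    finally show ?thesis .
  qed
  have conj3: "(AL lams \<inter> \<zeta> ` X \<noteq> {} \<and> gstar = fstar \<and>
             \<zeta> ` argmax_on f X = argmax_on f' (\<zeta> ` X) \<and>
             argmax_on f' (\<zeta> ` X) = AL lams \<inter> \<zeta> ` X)
           \<or>
            (AL lams \<inter> \<zeta> ` X = {} \<and> gstar > fstar \<and>
             (\<forall>lam. AL lam \<inter> \<zeta> ` X = {}))" if gl: "g lams = gstar" for lams
    proof (cases "AL lams \<inter> \<zeta> ` X = {}")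
      case False
      then show ?thesis using key[OF False] part1 part2[of lams] by auto
    next
      case True
      have ne: "gstar \<noteq> fstar"
      proof
        assume "gstar = fstar"
        then have "\<zeta> x0 \<in> AL lams" using inAL[OF x0(1)] x0 gl by simp
        then show False using True x0 by auto
      qed
      have "\<forall>lam. AL lam \<inter> \<zeta> ` X = {}" using key ne by blast
      then show ?thesis using True ne gs_ge by auto
    qed
  have main: "(\<forall>lam. g lam \<ge> fstar) \<and> gstar \<ge> fstar \<and>
        (\<forall>lams. g lams = gstar \<longrightarrow>
           ((AL lams \<inter> \<zeta> ` X \<noteq> {} \<and> gstar = fstar \<and>
             \<zeta> ` argmax_on f X = argmax_on f' (\<zeta> ` X) \<and>
             argmax_on f' (\<zeta> ` X) = AL lams \<inter> \<zeta> ` X)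
           \<or>
            (AL lams \<inter> \<zeta> ` X = {} \<and> gstar > fstar \<and>
             (\<forall>lam. AL lam \<inter> \<zeta> ` X = {})))) \<and>
        (\<forall>lams. AL lams \<inter> \<zeta> ` X \<noteq> {} \<longrightarrow> g lams = gstar)"
    using gge gs_ge conj3 key by blast
  show ?thesis unfolding Let_def
    using main unfolding X_def X'_def f_def f'_def fstar_def \<zeta>_def L_def g_def gstar_def AL_def .
qed

end
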